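(* Let $S$ be a semilattice and let $\psi:S\to\mathbb C$ satisfy $\operatorname{def}(\psi):=\sup_{x,y\in S}|\psi(x)\psi(y)-\psi(xy)|<1/5$. Let $S_1=\{e\in S:\ |\psi(e)-1|<7/25\}$ and let $\chi$ be the indicator function of $S_1$. Then $\chi:S\to\mathbb C$ is multiplicative (i.e. $\chi(xy)=\chi(x)\chi(y)$ for all $x,y\in S$) and $\sup_{e\in S}|\psi(e)-\chi(e)|\le\frac75\operatorname{def}(\psi)$.
   Context: A semilattice is a commutative semigroup in which every element is idempotent. *)

theory Defs
  imports "HOL-Analysis.Analysis" "HOL-Library.Extended_Real"
begin

text \<open>Defect of a map into the complex numbers, as an extended real supremum
(so that it is well defined even when unbounded).\<close>
definition defect :: "('a::times \<Rightarrow> complex) \<Rightarrow> ereal" where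
  "defect \<psi> = (SUP p\<in>(UNIV::('a \<times> 'a) set).
      ereal (cmod (\<psi> (fst p) * \<psi> (snd p) - \<psi> (fst p * snd p))))"

end

theory Submission
  imports Defs
begin

lemma aux_small:
  fixes a b d :: real
  assumes "a \<ge> 0" "b \<ge> 7/25" "a * b \<le> d" "d < 1/5" "b \<ge> 1 - a"
  shows "a \<le> 7/5 * d"
proof -
  have "a * (7/25) \<le> a * b" using assms by (intro mult_left_mono) auto
  hence a1: "a < 5/7" using assms by linarith
  have "a * (1 - a) \<le> a * b" using assms by (intro mult_left_mono) auto
  hence "a * (1 - a) < 1/5" using assms by linarith
  have a2: "a < 28/100"
  proof (rule ccontr)
    assume "\<not> a < 28/100"
    hence "(a - 28/100) * (5/7 - a) \<ge> 0" using a1 by simp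
    moreover have "a*(1-a) - 1/5 = (a - 28/100)*(5/7-a) + a*(1 - 5/7 - 28/100)"
      by (simp add: algebra_simps divide_simps)
    moreover have "a*(1 - 5/7 - 28/100) \<ge> 0" using \<open>a\<ge>0\<close> by simp
    ultimately show False using \<open>a * (1 - a) < 1/5\<close> \<open>a\<ge>0\<close> by linarith
  qed
  have "a * (5/7) \<le> a * b" using assms a2 by (intro mult_left_mono) auto
  thus ?thesis using assms by linarith
qed

lemma aux_big:
  fixes a b d :: real
  assumes "a \<ge> 0" "b < 7/25" "b \<ge> 0" "a * b \<le> d" "d < 1/5" "a \<ge> 1 - b"
  shows "b \<le> 7/5 * d"
proof -
  have "b \<ge> 0" using assms by linarith
  have "(18/25) * b \<le> a * b" using assms \<open>b\<ge>0\<close> by (intro mult_right_mono) auto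
  hence "b \<le> 25/18 * d" using assms by linarith
  moreover have "d \<ge> 0" using assms \<open>b\<ge>0\<close> by (metis mult_nonneg_nonneg order_trans)
  ultimately show ?thesis by linarith
qed

theorem propositionp:
  fixes \<psi> :: "'a::ab_semigroup_mult \<Rightarrow> complex"
  assumes idem: "\<And>x::'a. x * x = x"
    and small: "defect \<psi> < ereal (1/5)"
  defines "S1 \<equiv> {e. cmod (\<psi> e - 1) < 7/25}"
  defines "chi \<equiv> (\<lambda>e. if e \<in> S1 then (1::complex) else 0)"
  shows "(\<forall>x y. chi (x * y) = chi x * chi y)
    \<and> (SUP e\<in>(UNIV::'a set). ereal (cmod (\<psi> e - chi e))) \<le> ereal (7/5) * defect \<psi>"
proof -
  have bnd: "ereal (cmod (\<psi> x * \<psi> y - \<psi> (x * y))) \<le> defect \<psi>" for x y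
    unfolding defect_def by (rule SUP_upper2[of "(x,y)"]) auto
  have "0 \<le> defect \<psi>" using bnd[of undefined undefined] by (meson order_trans ereal_less_eq(5) norm_ge_zero)
  then obtain d where dd: "defect \<psi> = ereal d" and d0: "0 \<le> d" and d5: "d < 1/5"
    using small by (cases "defect \<psi>") auto
  have B: "cmod (\<psi> x * \<psi> y - \<psi> (x * y)) \<le> d" for x y using bnd[of x y] dd by simp
  have E: "cmod (\<psi> e - chi e) \<le> 7/5 * d" for e
  proof -
    let ?a = "cmod (\<psi> e)" and ?b = "cmod (\<psi> e - 1)"
    have "cmod (\<psi> e * \<psi> e - \<psi> e) \<le> d" using B[of e e] idem[of e] by simp
    moreover have "\<psi> e * \<psi> e - \<psi> e = \<psi> e * (\<psi> e - 1)" by (simp add: algebra_simps)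
    ultimately have ab: "?a * ?b \<le> d" by (simp add: norm_mult)
    have t1: "?b \<ge> 1 - ?a" using norm_triangle_ineq2[of 1 "\<psi> e"] by (simp add: norm_minus_commute)
    have t2: "?a \<ge> 1 - ?b" using norm_triangle_ineq4[of "\<psi> e" "\<psi> e - 1"] by simp
    show ?thesis
    proof (cases "e \<in> S1")
      case True
      hence "?b < 7/25" by (simp add: S1_def)
      thus ?thesis using aux_big[OF norm_ge_zero _ norm_ge_zero ab d5 t2] True by (simp add: chi_def)
    next
      case False
      hence "?b \<ge> 7/25" by (simp add: S1_def)
      thus ?thesis using aux_small[OF norm_ge_zero _ ab d5 t1] False by (simp add: chi_def)
    qed
  qed
  have inS: "e \<in> S1 \<Longrightarrow> cmod (\<psi> e) > 18/25" for e
    using norm_triangle_ineq4[of "\<psi> e" "\<psi> e - 1"] by (simp add: S1_def)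
  have outS: "e \<notin> S1 \<Longrightarrow> cmod (\<psi> e) \<le> 7/5 * d" for e
    using E[of e] by (simp add: chi_def)
  have allb: "cmod (\<psi> e) < 32/25" for e
  proof (cases "e \<in> S1")
    case True then show ?thesis
      using norm_triangle_ineq[of "\<psi> e - 1" 1] by (simp add: S1_def)
  next
    case False then show ?thesis using outS[of e] d5 by linarith
  qed
  have xy: "cmod (\<psi> (x*y)) \<le> d + cmod (\<psi> x) * cmod (\<psi> y)" for x y
    using B[of x y] norm_triangle_ineq2[of "\<psi> (x*y)" "\<psi> x * \<psi> y"]
    by (simp add: norm_mult norm_minus_commute)
  have out1: "x * y \<notin> S1" if "x \<notin> S1" for x y
  proof -
    have "cmod (\<psi> x) * cmod (\<psi> y) \<le> (7/5*d) * (32/25)"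
      using outS[OF that] allb[of y] d0 by (intro mult_mono) auto
    hence "cmod (\<psi> (x*y)) < 18/25" using xy[of x y] d5 by linarith
    thus ?thesis using inS by force
  qed
  have mult: "chi (x * y) = chi x * chi y" for x y
  proof (cases "x \<in> S1 \<and> y \<in> S1")
    case True
    have "x * y \<in> S1"
    proof (rule ccontr)
      assume "x * y \<notin> S1"
      hence o: "cmod (\<psi> (x*y)) \<le> 7/5*d" by (rule outS)
      have "(18/25) * (18/25) \<le> cmod (\<psi> x) * cmod (\<psi> y)"
        using inS True by (intro mult_mono) (auto intro: less_imp_le)
      moreover have "cmod (\<psi> x) * cmod (\<psi> y) \<le> cmod (\<psi> (x*y)) + d"
        using B[of x y] norm_triangle_ineq2[of "\<psi> x * \<psi> y" "\<psi> (x*y)"] by (simp add: norm_mult)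
    ultimately show False using o d5 by linarith
    qed
    thus ?thesis using True by (simp add: chi_def)
  next
    case False
    hence "x \<notin> S1 \<or> y \<notin> S1" by blast
    then show ?thesis
    proof
      assume "x \<notin> S1" thus ?thesis using out1[of x y] by (simp add: chi_def)
    next
      assume "y \<notin> S1" thus ?thesis using out1[of y x] by (simp add: chi_def mult.commute)
    qed
  qed
  have "(SUP e\<in>(UNIV::'a set). ereal (cmod (\<psi> e - chi e))) \<le> ereal (7/5 * d)"
    by (rule SUP_least) (use E in auto)
  thus ?thesis using mult dd by simp
qed

end
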